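(* Suppose $A_\star\in\mathbb R^{n\times n}$ has a Jordan block with eigenvalue of modulus $|\lambda|=1$ and size $k$, and that $(A_\star,B_\star,C_\star,D_\star)$ is minimal. Then there exists a constant $\mathsf C>0$ depending on $A_\star,B_\star,C_\star$, $n$ and $k$ such that for all $N\ge\max\{20n^2,2k\}$, \[ \sqrt{\Big\|\sum_{t=0}^N\mathscr G_t\Big\|_{\mathrm{op}}}\ge\mathsf C N^k,\qquad\mathscr G_t:=\sum_{s=0}^tC_\star A_\star^{t-s}B_\star B_\star^\top(A_\star^{t-s})^\top C_\star^\top. \]
   Context: Minimality means $\mathrm{rank}[B_\star,A_\star B_\star,\dots,A_\star^{n-1}B_\star]=n$ and $\mathrm{rank}[C_\star^\top,(C_\star A_\star)^\top,\dots,(C_\star A_\star^{n-1})^\top]=n$. *)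

theory Defs
  imports "Jordan_Normal_Form.Jordan_Normal_Form" "Jordan_Normal_Form.DL_Rank"
begin

definition vnorm2 :: "real vec \<Rightarrow> real" where
  "vnorm2 x = sqrt (\<Sum>i<dim_vec x. (x $ i)^2)"

definition op_norm :: "real mat \<Rightarrow> real" where
  "op_norm M = Sup {vnorm2 (M *\<^sub>v x) | x. x \<in> carrier_vec (dim_col M) \<and> vnorm2 x \<le> 1}"

definition mat_sum :: "nat \<Rightarrow> nat \<Rightarrow> ('i \<Rightarrow> real mat) \<Rightarrow> 'i set \<Rightarrow> real mat" where
  "mat_sum r c f I = mat r c (\<lambda>ij. \<Sum>i\<in>I. f i $$ ij)"

definition ctrb_mat :: "nat \<Rightarrow> real mat \<Rightarrow> real mat \<Rightarrow> real mat" where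
  "ctrb_mat n A B = mat_of_cols n (concat (map (\<lambda>i. cols (A ^\<^sub>m i * B)) [0..<n]))"

definition obsv_mat :: "nat \<Rightarrow> real mat \<Rightarrow> real mat \<Rightarrow> real mat" where
  "obsv_mat n A C = mat_of_cols n (concat (map (\<lambda>i. cols (transpose_mat (C * A ^\<^sub>m i))) [0..<n]))"

definition G_mat :: "real mat \<Rightarrow> real mat \<Rightarrow> real mat \<Rightarrow> nat \<Rightarrow> real mat" where
  "G_mat A B C t = mat_sum (dim_row C) (dim_row C)
     (\<lambda>s. C * A ^\<^sub>m (t - s) * B * transpose_mat B * transpose_mat (A ^\<^sub>m (t - s)) * transpose_mat C)
     {0..t}"

end

theory Submission
  imports Defs
begin


lemma full_rank_span:
  fixes M :: "'a::field mat"
  assumes M: "M \<in> carrier_mat n nc" and r: "vec_space.rank n M = n" and v: "v \<in> carrier_vec n"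
  shows "\<exists>c. v = M *\<^sub>v vec nc c"
proof -
  interpret vs: vec_space "TYPE('a)" n .
  obtain S where S: "maximal S (\<lambda>T. T \<subseteq> set (cols M) \<and> vs.lin_indpt T)"
    using maximal_exists[of "(\<lambda>T. T \<subseteq> set (cols M) \<and> vs.lin_indpt T)" "card (set (cols M))" "{}"]
    by (meson List.finite_set card_mono empty_iff empty_subsetI vs.finite_lin_indpt2 rev_finite_subset)
  have cS: "card S = n" using vs.rank_card_indpt[OF M S] r by simp
  have Ssub: "S \<subseteq> set (cols M)" "vs.lin_indpt S" using S unfolding maximal_def by auto
  have colsC: "set (cols M) \<subseteq> carrier_vec n" using M cols_dim by blast
  have SC: "S \<subseteq> carrier_vec n" using Ssub colsC by auto
  have "vs.basis S"
    by (rule vs.dim_li_is_basis, simp, rule finite_subset[OF Ssub(1)], simp, 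
        simp add: SC, rule Ssub(2), simp add: cS vs.dim_is_n)
  hence "vs.span S = carrier_vec n" unfolding vs.basis_def by simp
  moreover have "vs.span S \<subseteq> vs.span (set (cols M))" using vs.span_is_monotone[OF Ssub(1)] .
  ultimately have "v \<in> vs.span (set (cols M))" using v by auto
  hence "v \<in> vs.span_list (cols M)" using vs.span_list_as_span[OF colsC] by simp
  then obtain c where "v = vs.lincomb_list c (cols M)" by (metis vs.in_span_listE)
  also have "\<dots> = mat_of_cols n (cols M) *\<^sub>v vec (length (cols M)) c"
    by (rule vs.lincomb_list_as_mat_mult, insert colsC, auto)
  also have "\<dots> = M *\<^sub>v vec nc c" using M mat_of_cols_cols[of M] by simp
  finally show ?thesis by blast
qed

lemma diag_block_mat_index:
  assumes "i < dim_row M" "j < dim_col M"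
  shows "diag_block_mat (xs @ M # ys) $$ (sum_list (map dim_row xs) + i, sum_list (map dim_col xs) + j) = M $$ (i,j)"
proof (induct xs)
  case Nil
  show ?case using assms by (simp add: Let_def dim_diag_block_mat)
next
  case (Cons X xs)
  show ?case using Cons assms by (simp add: Let_def dim_diag_block_mat)
qed

lemma jordan_entry:
  fixes \<mu> :: "'a :: comm_ring_1"
  assumes "(k, \<mu>) \<in> set n_as" "0 < k"
  shows "\<exists>r s. r < sum_list (map fst n_as) \<and> s < sum_list (map fst n_as) \<and>
     (\<forall>j. (jordan_matrix n_as ^\<^sub>m j) $$ (r,s) = of_nat (j choose (k-1)) * \<mu> ^ (j - (k-1)))"
proof -
  obtain xs ys where nas: "n_as = xs @ (k,\<mu>) # ys" using split_list[OF assms(1)] by blast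
  define o1 where "o1 = sum_list (map fst xs)"
  have d: "sum_list (map dim_row (map (\<lambda>(n,a). jordan_block n a ^\<^sub>m j) xs)) = o1"
     "sum_list (map dim_col (map (\<lambda>(n,a). jordan_block n a ^\<^sub>m j) xs)) = o1" for j
    unfolding o1_def by (induct xs, auto)+
  have "(jordan_matrix n_as ^\<^sub>m j) $$ (o1 + 0, o1 + (k-1)) = of_nat (j choose (k-1)) * \<mu> ^ (j - (k-1))" for j
  proof -
    have X: "diag_block_mat (map (\<lambda>(n,a). jordan_block n a ^\<^sub>m j) xs @ jordan_block k \<mu> ^\<^sub>m j # map (\<lambda>(n,a). jordan_block n a ^\<^sub>m j) ys)
       $$ (sum_list (map dim_row (map (\<lambda>(n,a). jordan_block n a ^\<^sub>m j) xs)) + 0, sum_list (map dim_col (map (\<lambda>(n,a). jordan_block n a ^\<^sub>m j) xs)) + (k-1))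
       = (jordan_block k \<mu> ^\<^sub>m j) $$ (0, k-1)"
      by (rule diag_block_mat_index, insert assms(2), auto)
    have "(jordan_matrix n_as ^\<^sub>m j) $$ (o1 + 0, o1 + (k-1)) = (jordan_block k \<mu> ^\<^sub>m j) $$ (0, k-1)"
      unfolding jordan_matrix_pow nas using X unfolding d by simp
    also have "\<dots> = of_nat (j choose (k-1)) * \<mu> ^ (j - (k-1))" unfolding jordan_block_pow using assms(2) by simp
    finally show ?thesis .
  qed
  moreover have "o1 + (k-1) < sum_list (map fst n_as)" "o1 + 0 < sum_list (map fst n_as)"
    unfolding nas o1_def using assms(2) by auto
  ultimately show ?thesis by blast
qed



lemma pow_mat_add: assumes A: "A \<in> carrier_mat n n"
  shows "A ^\<^sub>m (i + j) = A ^\<^sub>m i * A ^\<^sub>m j"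
proof (induct j)
  case 0 then show ?case using A by simp
next
  case (Suc j)
  have "A ^\<^sub>m (i + Suc j) = (A ^\<^sub>m i * A ^\<^sub>m j) * A" using Suc by simp
  also have "\<dots> = A ^\<^sub>m i * (A ^\<^sub>m j * A)" using A by (simp add: assoc_mult_mat[of _ n n _ n _ n])
  finally show ?case by simp
qed

lemma obsv_entry:
  assumes r: "r < dim_col (obsv_mat n A C)" and A: "A \<in> carrier_mat n n"
  shows "\<exists>i<n. \<exists>q<dim_row C. \<forall>x<n. obsv_mat n A C $$ (x,r) = (C * A ^\<^sub>m i) $$ (q,x)"
proof -
  define L where "L = concat (map (\<lambda>i. cols (transpose_mat (C * A ^\<^sub>m i))) [0..<n])"
  have O: "obsv_mat n A C = mat_of_cols n L" unfolding obsv_mat_def L_def ..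
  have rL: "r < length L" using r O by simp
  then have "L ! r \<in> set L" by simp
  then obtain i w where i: "i < n" and w: "w \<in> set (cols (transpose_mat (C * A ^\<^sub>m i)))" and wL: "w = L ! r"
    unfolding L_def by auto
  from w obtain q where q: "q < dim_row C" and wq: "w = col (transpose_mat (C * A ^\<^sub>m i)) q"
    by (auto simp: in_set_conv_nth)
  have "\<forall>x<n. obsv_mat n A C $$ (x,r) = (C * A ^\<^sub>m i) $$ (q,x)"
  proof (intro allI impI)
    fix x assume x: "x < n"
    have "obsv_mat n A C $$ (x,r) = L ! r $ x" unfolding O mat_of_cols_def using x rL by simp
    also have "\<dots> = (C * A ^\<^sub>m i) $$ (q,x)" unfolding wL[symmetric] wq using q x A
      by simp
    finally show "obsv_mat n A C $$ (x,r) = (C * A ^\<^sub>m i) $$ (q,x)" .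
  qed
  with i q show ?thesis by blast
qed

lemma ctrb_entry:
  assumes r: "r < dim_col (ctrb_mat n A B)" and B: "dim_row B = n" and A: "A \<in> carrier_mat n n"
  shows "\<exists>i<n. \<exists>l<dim_col B. \<forall>y<n. ctrb_mat n A B $$ (y,r) = (A ^\<^sub>m i * B) $$ (y,l)"
proof -
  define L where "L = concat (map (\<lambda>i. cols (A ^\<^sub>m i * B)) [0..<n])"
  have O: "ctrb_mat n A B = mat_of_cols n L" unfolding ctrb_mat_def L_def ..
  have rL: "r < length L" using r O by simp
  then have "L ! r \<in> set L" by simp
  then obtain i w where i: "i < n" and w: "w \<in> set (cols (A ^\<^sub>m i * B))" and wL: "w = L ! r"
    unfolding L_def by auto
  from w obtain l where q: "l < dim_col B" and wq: "w = col (A ^\<^sub>m i * B) l"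
    by (auto simp: in_set_conv_nth)
  have "\<forall>y<n. ctrb_mat n A B $$ (y,r) = (A ^\<^sub>m i * B) $$ (y,l)"
  proof (intro allI impI)
    fix x assume x: "x < n"
    have "ctrb_mat n A B $$ (x,r) = L ! r $ x" unfolding O mat_of_cols_def using x rL by simp
    also have "\<dots> = (A ^\<^sub>m i * B) $$ (x,l)" unfolding wL[symmetric] wq using q x A
      by simp
    finally show "ctrb_mat n A B $$ (x,r) = (A ^\<^sub>m i * B) $$ (x,l)" .
  qed
  with i q show ?thesis by blast
qed



definition Fm :: "real mat \<Rightarrow> real mat \<Rightarrow> real mat \<Rightarrow> nat \<Rightarrow> real mat" where
  "Fm A B C j = C * A ^\<^sub>m j * B"
definition gS :: "real mat \<Rightarrow> real mat \<Rightarrow> real mat \<Rightarrow> nat \<Rightarrow> real" where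
  "gS A B C j = (\<Sum>q<dim_row C. \<Sum>l<dim_col B. (Fm A B C j $$ (q,l))^2)"
definition SS :: "nat \<Rightarrow> real mat \<Rightarrow> real mat \<Rightarrow> real mat \<Rightarrow> nat \<Rightarrow> real" where
  "SS n A B C j = (\<Sum>s\<le>2*n. gS A B C (j+s))"

lemma gS_nonneg: "gS A B C j \<ge> 0" unfolding gS_def by (intro sum_nonneg, simp)

lemma Fm_le_gS: assumes "q < dim_row C" "l < dim_col B"
  shows "(Fm A B C j $$ (q,l))^2 \<le> gS A B C j"
proof -
  have "(Fm A B C j $$ (q,l))^2 \<le> (\<Sum>l<dim_col B. (Fm A B C j $$ (q,l))^2)"
    by (rule member_le_sum, insert assms, auto)
  also have "\<dots> \<le> gS A B C j" unfolding gS_def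
    by (rule member_le_sum[where f = "\<lambda>q. \<Sum>l<dim_col B. (Fm A B C j $$ (q,l))^2"], insert assms, auto intro: sum_nonneg)
  finally show ?thesis .
qed

lemma gS_le_SS: assumes "s \<le> 2*n" shows "gS A B C (j+s) \<le> SS n A B C j"
  unfolding SS_def by (rule member_le_sum[where f = "\<lambda>s. gS A B C (j+s)"], insert assms, auto intro: gS_nonneg)

lemma Fm_le_SS: assumes "q < dim_row C" "l < dim_col B" "s \<le> 2*n"
  shows "\<bar>Fm A B C (j+s) $$ (q,l)\<bar> \<le> sqrt (SS n A B C j)"
proof -
  have "(Fm A B C (j+s) $$ (q,l))^2 \<le> SS n A B C j"
    using Fm_le_gS[OF assms(1,2), of A "j+s"] gS_le_SS[OF assms(3), of A B C j] by linarith
  thus ?thesis using real_le_rsqrt by (metis real_sqrt_abs real_sqrt_le_mono)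
qed

lemma inner_entry:
  assumes A: "A \<in> carrier_mat n n" and B: "B \<in> carrier_mat n m" and C: "C \<in> carrier_mat p n"
    and q: "q < p" and l: "l < m"
  shows "(\<Sum>x<n. \<Sum>y<n. (C * A ^\<^sub>m i) $$ (q,x) * (A ^\<^sub>m j) $$ (x,y) * (A ^\<^sub>m i' * B) $$ (y,l))
     = Fm A B C (i+j+i') $$ (q,l)"
proof -
  have "Fm A B C (i+j+i') = (C * A ^\<^sub>m i) * (A ^\<^sub>m j * (A ^\<^sub>m i' * B))"
  proof -
    have X: "A ^\<^sub>m i \<in> carrier_mat n n" "A ^\<^sub>m j \<in> carrier_mat n n" "A ^\<^sub>m i' \<in> carrier_mat n n" using A by auto
    have "C * (A ^\<^sub>m i * A ^\<^sub>m j * A ^\<^sub>m i') * B = C * A ^\<^sub>m i * (A ^\<^sub>m j * (A ^\<^sub>m i' * B))"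
      using X B C by (simp add: mult_carrier_mat assoc_mult_mat[of _ p n _ n _ m] assoc_mult_mat[of _ p n _ n _ n] assoc_mult_mat[of _ n n _ n _ n] assoc_mult_mat[of _ n n _ n _ m])
    then show ?thesis unfolding Fm_def pow_mat_add[OF A] .
  qed
  also have "\<dots> $$ (q,l) = (\<Sum>x<n. (C * A ^\<^sub>m i) $$ (q,x) * (\<Sum>y<n. (A ^\<^sub>m j) $$ (x,y) * (A ^\<^sub>m i' * B) $$ (y,l)))"
    using A B C q l by (simp add: scalar_prod_def lessThan_atLeast0)
  also have "\<dots> = (\<Sum>x<n. \<Sum>y<n. (C * A ^\<^sub>m i) $$ (q,x) * (A ^\<^sub>m j) $$ (x,y) * (A ^\<^sub>m i' * B) $$ (y,l))"
    by (simp add: sum_distrib_left mult.assoc)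
  finally show ?thesis by simp
qed



lemma sum4:
  fixes f :: "'x \<Rightarrow> 'r \<Rightarrow> real"
  shows "(\<Sum>x\<in>X. \<Sum>y\<in>Y. (\<Sum>r\<in>R. f x r) * g x y * (\<Sum>u\<in>U. h y u)) = (\<Sum>r\<in>R. \<Sum>u\<in>U. \<Sum>x\<in>X. \<Sum>y\<in>Y. f x r * g x y * h y u)"
proof -
  have "(\<Sum>x\<in>X. \<Sum>y\<in>Y. (\<Sum>r\<in>R. f x r) * g x y * (\<Sum>u\<in>U. h y u)) = (\<Sum>x\<in>X. \<Sum>y\<in>Y. \<Sum>u\<in>U. \<Sum>r\<in>R. f x r * g x y * h y u)"
    by (simp add: sum_distrib_left sum_distrib_right)
  also have "\<dots> = (\<Sum>x\<in>X. \<Sum>y\<in>Y. \<Sum>r\<in>R. \<Sum>u\<in>U. f x r * g x y * h y u)"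
    by (rule sum.cong[OF refl], rule sum.cong[OF refl], rule sum.swap)
  also have "\<dots> = (\<Sum>x\<in>X. \<Sum>r\<in>R. \<Sum>y\<in>Y. \<Sum>u\<in>U. f x r * g x y * h y u)"
    by (rule sum.cong[OF refl], rule sum.swap)
  also have "\<dots> = (\<Sum>r\<in>R. \<Sum>x\<in>X. \<Sum>y\<in>Y. \<Sum>u\<in>U. f x r * g x y * h y u)"
    by (rule sum.swap)
  also have "\<dots> = (\<Sum>r\<in>R. \<Sum>x\<in>X. \<Sum>u\<in>U. \<Sum>y\<in>Y. f x r * g x y * h y u)"
    by (rule sum.cong[OF refl], rule sum.cong[OF refl], rule sum.swap)
  also have "\<dots> = (\<Sum>r\<in>R. \<Sum>u\<in>U. \<Sum>x\<in>X. \<Sum>y\<in>Y. f x r * g x y * h y u)"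
    by (rule sum.cong[OF refl], rule sum.swap)
  finally show ?thesis .
qed

lemma sum_delta_mult: "(b::nat) < n \<Longrightarrow> (\<Sum>y<n. f y * (if y = b then 1 else 0)) = (f b :: real)"
proof -
  assume b: "b < n"
  have "(\<Sum>y<n. f y * (if y = b then 1 else 0)) = (\<Sum>y<n. if y = b then f y else 0)" by (rule sum.cong) auto
  also have "\<dots> = f b" using b by (subst sum.delta, auto)
  finally show ?thesis .
qed

lemma dim_obsv[simp]: "dim_row (obsv_mat n A C) = n" unfolding obsv_mat_def by simp
lemma dim_ctrb[simp]: "dim_row (ctrb_mat n A B) = n" unfolding ctrb_mat_def by simp

lemma unit_coeffs:
  fixes M :: "real mat"
  assumes M: "M \<in> carrier_mat n nc" and r: "vec_space.rank n M = n" and a: "a < n"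
  shows "\<exists>\<alpha>. \<forall>x<n. (if x = a then 1 else 0) = (\<Sum>r<nc. M $$ (x,r) * \<alpha> r)"
proof -
  obtain c where c: "unit_vec n a = M *\<^sub>v vec nc c" using full_rank_span[OF M r, of "unit_vec n a"] by auto
  have "\<forall>x<n. (if x = a then 1 else 0) = (\<Sum>r<nc. M $$ (x,r) * c r)"
  proof (intro allI impI)
    fix x assume x: "x < n"
    have "(if x = a then 1 else 0) = unit_vec n a $ x" using x a by simp
    also have "\<dots> = (\<Sum>r<nc. M $$ (x,r) * c r)" unfolding c using x M
      by (simp add: scalar_prod_def lessThan_atLeast0)
    finally show "(if x = a then 1 else 0) = (\<Sum>r<nc. M $$ (x,r) * c r)" .
  qed
  thus ?thesis by blast
qed

lemma Apow_entry_bound: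
  assumes A: "A \<in> carrier_mat n n" and B: "B \<in> carrier_mat n m" and C: "C \<in> carrier_mat p n"
    and ctrb: "vec_space.rank n (ctrb_mat n A B) = n"
    and obsv: "vec_space.rank n (obsv_mat n A C) = n"
    and a: "a < n" and b: "b < n"
  shows "\<exists>c\<ge>0. \<forall>j. \<bar>(A ^\<^sub>m j) $$ (a,b)\<bar> \<le> c * sqrt (SS n A B C j)"
proof -
  define Om where "Om = obsv_mat n A C"
  define Rm where "Rm = ctrb_mat n A B"
  define nO where "nO = dim_col Om"
  define nR where "nR = dim_col Rm"
  have Oc: "Om \<in> carrier_mat n nO" unfolding Om_def nO_def carrier_mat_def by simp
  have Rc: "Rm \<in> carrier_mat n nR" unfolding Rm_def nR_def carrier_mat_def by simp
  obtain \<alpha> where al: "\<forall>x<n. (if x = a then 1 else 0) = (\<Sum>r<nO. Om $$ (x,r) * \<alpha> r)"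
    using unit_coeffs[OF Oc obsv[folded Om_def] a] by blast
  obtain \<beta> where be: "\<forall>y<n. (if y = b then 1 else 0) = (\<Sum>u<nR. Rm $$ (y,u) * \<beta> u)"
    using unit_coeffs[OF Rc ctrb[folded Rm_def] b] by blast
  have "\<forall>r. \<exists>i q. r < nO \<longrightarrow> (i<n \<and> q<p \<and> (\<forall>x<n. Om $$ (x,r) = (C * A ^\<^sub>m i) $$ (q,x)))"
    using obsv_entry[OF _ A, of _ C] C unfolding Om_def nO_def by auto
  then obtain fi fq where fO: "\<And>r. r < nO \<Longrightarrow> fi r < n \<and> fq r < p \<and> (\<forall>x<n. Om $$ (x,r) = (C * A ^\<^sub>m (fi r)) $$ (fq r,x))"
    by metis
  have "\<forall>u. \<exists>i l. u < nR \<longrightarrow> (i<n \<and> l<m \<and> (\<forall>y<n. Rm $$ (y,u) = (A ^\<^sub>m i * B) $$ (y,l)))"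
    using ctrb_entry[of _ n A B] A B unfolding Rm_def nR_def by auto
  then obtain gi gl where gR: "\<And>u. u < nR \<Longrightarrow> gi u < n \<and> gl u < m \<and> (\<forall>y<n. Rm $$ (y,u) = (A ^\<^sub>m (gi u) * B) $$ (y,gl u))"
    by metis
  define c where "c = (\<Sum>r<nO. \<Sum>u<nR. \<bar>\<alpha> r\<bar> * \<bar>\<beta> u\<bar>)"
  have "\<forall>j. \<bar>(A ^\<^sub>m j) $$ (a,b)\<bar> \<le> c * sqrt (SS n A B C j)"
  proof
    fix j
    let ?A = "A ^\<^sub>m j"
    have "?A $$ (a,b) = (\<Sum>x<n. \<Sum>y<n. (if x = a then 1 else 0) * ?A $$ (x,y) * (if y = b then 1 else 0))"
    proof -
      have "(\<Sum>x<n. \<Sum>y<n. (if x = a then 1 else 0) * ?A $$ (x,y) * (if y = b then 1 else 0))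
         = (\<Sum>x<n. (if x = a then 1 else 0) * ?A $$ (x,b))"
        by (rule sum.cong[OF refl], rule sum_delta_mult[OF b])
      also have "\<dots> = ?A $$ (a,b)" using sum_delta_mult[OF a, of "\<lambda>x. ?A $$ (x,b)"] by (simp add: mult.commute)
      finally show ?thesis by simp
    qed
    also have "\<dots> = (\<Sum>x<n. \<Sum>y<n. (\<Sum>r<nO. Om $$ (x,r) * \<alpha> r) * ?A $$ (x,y) * (\<Sum>u<nR. Rm $$ (y,u) * \<beta> u))"
      using al be by simp
    also have "\<dots> = (\<Sum>r<nO. \<Sum>u<nR. \<Sum>x<n. \<Sum>y<n. (Om $$ (x,r) * \<alpha> r) * ?A $$ (x,y) * (Rm $$ (y,u) * \<beta> u))"
      by (rule sum4)
    also have "\<dots> = (\<Sum>r<nO. \<Sum>u<nR. \<alpha> r * \<beta> u * (\<Sum>x<n. \<Sum>y<n. Om $$ (x,r) * ?A $$ (x,y) * Rm $$ (y,u)))"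
      by (simp add: sum_distrib_left mult_ac)
    also have "\<dots> = (\<Sum>r<nO. \<Sum>u<nR. \<alpha> r * \<beta> u * Fm A B C (j + (fi r + gi u)) $$ (fq r, gl u))"
    proof (rule sum.cong[OF refl], rule sum.cong[OF refl])
      fix r u assume r: "r \<in> {..<nO}" and u: "u \<in> {..<nR}"
      have "(\<Sum>x<n. \<Sum>y<n. Om $$ (x,r) * ?A $$ (x,y) * Rm $$ (y,u))
         = (\<Sum>x<n. \<Sum>y<n. (C * A ^\<^sub>m (fi r)) $$ (fq r,x) * ?A $$ (x,y) * (A ^\<^sub>m (gi u) * B) $$ (y,gl u))"
        using fO[of r] gR[of u] r u by simp
      also have "\<dots> = Fm A B C (fi r + j + gi u) $$ (fq r, gl u)"
        by (rule inner_entry[OF A B C], insert fO[of r] gR[of u] r u, auto)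
      finally show "\<alpha> r * \<beta> u * (\<Sum>x<n. \<Sum>y<n. Om $$ (x,r) * ?A $$ (x,y) * Rm $$ (y,u))
        = \<alpha> r * \<beta> u * Fm A B C (j + (fi r + gi u)) $$ (fq r, gl u)" by (simp add: ac_simps)
    qed
    finally have eq: "?A $$ (a,b) = \<dots>" .
    have "\<bar>?A $$ (a,b)\<bar> \<le> (\<Sum>r<nO. \<Sum>u<nR. \<bar>\<alpha> r * \<beta> u * Fm A B C (j + (fi r + gi u)) $$ (fq r, gl u)\<bar>)"
      unfolding eq by (rule order_trans[OF sum_abs], rule sum_mono, rule sum_abs)
    also have "\<dots> \<le> (\<Sum>r<nO. \<Sum>u<nR. \<bar>\<alpha> r\<bar> * \<bar>\<beta> u\<bar> * sqrt (SS n A B C j))"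
    proof (rule sum_mono, rule sum_mono)
      fix r u assume r: "r \<in> {..<nO}" and u: "u \<in> {..<nR}"
      have "\<bar>Fm A B C (j + (fi r + gi u)) $$ (fq r, gl u)\<bar> \<le> sqrt (SS n A B C j)"
        by (rule Fm_le_SS, insert fO[of r] gR[of u] r u C B, auto)
      then show "\<bar>\<alpha> r * \<beta> u * Fm A B C (j + (fi r + gi u)) $$ (fq r, gl u)\<bar> \<le> \<bar>\<alpha> r\<bar> * \<bar>\<beta> u\<bar> * sqrt (SS n A B C j)"
        by (simp add: abs_mult mult_left_mono)
    qed
    also have "\<dots> = c * sqrt (SS n A B C j)" unfolding c_def by (simp add: sum_distrib_right)
    finally show "\<bar>?A $$ (a,b)\<bar> \<le> c * sqrt (SS n A B C j)" .
  qed
  moreover have "c \<ge> 0" unfolding c_def by (intro sum_nonneg, simp)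
  ultimately show ?thesis by blast
qed



lemma SS_nonneg: "SS n A B C j \<ge> 0" unfolding SS_def by (intro sum_nonneg gS_nonneg)

lemma Apow_bound_all:
  assumes A: "A \<in> carrier_mat n n" and B: "B \<in> carrier_mat n m" and C: "C \<in> carrier_mat p n"
    and ctrb: "vec_space.rank n (ctrb_mat n A B) = n"
    and obsv: "vec_space.rank n (obsv_mat n A C) = n"
  shows "\<exists>c\<ge>0. \<forall>j a b. a < n \<longrightarrow> b < n \<longrightarrow> \<bar>(A ^\<^sub>m j) $$ (a,b)\<bar> \<le> c * sqrt (SS n A B C j)"
proof -
  have "\<forall>ab. \<exists>c. fst ab < n \<and> snd ab < n \<longrightarrow> c \<ge> 0 \<and> (\<forall>j. \<bar>(A ^\<^sub>m j) $$ ab\<bar> \<le> c * sqrt (SS n A B C j))"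
    using Apow_entry_bound[OF A B C ctrb obsv] by fastforce
  then obtain cf where cf: "\<And>ab. fst ab < n \<Longrightarrow> snd ab < n \<Longrightarrow> cf ab \<ge> 0 \<and> (\<forall>j. \<bar>(A ^\<^sub>m j) $$ ab\<bar> \<le> cf ab * sqrt (SS n A B C j))"
    by metis
  define c where "c = (\<Sum>ab\<in>{..<n}\<times>{..<n}. cf ab)"
  have c0: "c \<ge> 0" unfolding c_def by (rule sum_nonneg, insert cf, auto)
  have "\<forall>j a b. a < n \<longrightarrow> b < n \<longrightarrow> \<bar>(A ^\<^sub>m j) $$ (a,b)\<bar> \<le> c * sqrt (SS n A B C j)"
  proof (intro allI impI)
    fix j a b assume a: "a < n" and b: "b < n"
    have "cf (a,b) \<le> c" unfolding c_def
      by (rule member_le_sum, insert a b cf, auto)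
    hence "cf (a,b) * sqrt (SS n A B C j) \<le> c * sqrt (SS n A B C j)"
      by (rule mult_right_mono, simp add: SS_nonneg)
    moreover from cf[of "(a,b)"] a b have "\<bar>(A ^\<^sub>m j) $$ (a,b)\<bar> \<le> cf (a,b) * sqrt (SS n A B C j)" by auto
    ultimately show "\<bar>(A ^\<^sub>m j) $$ (a,b)\<bar> \<le> c * sqrt (SS n A B C j)" by linarith
  qed
  with c0 show ?thesis by blast
qed

lemma binom_bound:
  fixes n_as :: "(nat \<times> complex) list"
  assumes A: "A \<in> carrier_mat n n" and B: "B \<in> carrier_mat n m" and C: "C \<in> carrier_mat p n"
    and jnf: "jordan_nf (map_mat complex_of_real A) n_as"
    and blk: "(k, \<mu>) \<in> set n_as" and lam: "cmod \<mu> = 1"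
    and ctrb: "vec_space.rank n (ctrb_mat n A B) = n"
    and obsv: "vec_space.rank n (obsv_mat n A C) = n"
  shows "\<exists>c\<ge>0. \<forall>j. real (j choose (k-1)) \<le> c * sqrt (SS n A B C j)"
proof -
  obtain c where c0: "c \<ge> 0" and c: "\<And>j a b. a < n \<Longrightarrow> b < n \<Longrightarrow> \<bar>(A ^\<^sub>m j) $$ (a,b)\<bar> \<le> c * sqrt (SS n A B C j)"
    using Apow_bound_all[OF A B C ctrb obsv] by blast
  define Ac where "Ac = map_mat complex_of_real A"
  define J where "J = jordan_matrix n_as"
  have Ac: "Ac \<in> carrier_mat n n" using A unfolding Ac_def by simp
  from jnf have k0: "0 < k" using blk unfolding jordan_nf_def by force
  from jnf obtain P Q where wit: "similar_mat_wit Ac J P Q" unfolding jordan_nf_def similar_mat_def Ac_def J_def by blast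
  have PQ: "J \<in> carrier_mat n n" "P \<in> carrier_mat n n" "Q \<in> carrier_mat n n" "P * Q = 1\<^sub>m n" "Q * P = 1\<^sub>m n"
    using wit Ac unfolding similar_mat_wit_def Let_def by auto
  have pw: "Ac ^\<^sub>m j = P * J ^\<^sub>m j * Q" for j by (rule similar_mat_wit_pow_id[OF wit])
  have Jpow: "J ^\<^sub>m j = Q * Ac ^\<^sub>m j * P" for j
  proof -
    have Jj: "J ^\<^sub>m j \<in> carrier_mat n n" using PQ by simp
    have "Q * Ac ^\<^sub>m j * P = Q * (P * J ^\<^sub>m j * Q) * P" by (simp add: pw)
    also have "\<dots> = Q * (P * (J ^\<^sub>m j * Q)) * P" using PQ Jj by (simp add: assoc_mult_mat[of P n n _ n _ n])
    also have "\<dots> = ((Q * P) * (J ^\<^sub>m j * Q)) * P" using assoc_mult_mat[of Q n n P n "J ^\<^sub>m j * Q" n] PQ Jj by simp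
    also have "\<dots> = (J ^\<^sub>m j * Q) * P" using PQ Jj by simp
    also have "\<dots> = J ^\<^sub>m j * (Q * P)" using PQ Jj by (simp add: assoc_mult_mat[of _ n n Q n P n])
    also have "\<dots> = J ^\<^sub>m j" using PQ Jj by simp
    finally show ?thesis by simp
  qed
  obtain r s where rs: "r < sum_list (map fst n_as)" "s < sum_list (map fst n_as)"
    and Jrs: "\<And>j. (J ^\<^sub>m j) $$ (r,s) = of_nat (j choose (k-1)) * \<mu> ^ (j - (k-1))"
    using jordan_entry[OF blk k0] unfolding J_def by blast
  have nJ: "sum_list (map fst n_as) = n" using PQ(1) jordan_matrix_dim(1)[of n_as] unfolding J_def carrier_mat_def by simp
  have r: "r < n" and s: "s < n" using rs nJ by auto
  have Acpow: "Ac ^\<^sub>m j = map_mat complex_of_real (A ^\<^sub>m j)" for j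
    unfolding Ac_def by (rule of_real_hom.mat_hom_pow[OF A, symmetric])
  define c' where "c' = (\<Sum>x<n. \<Sum>y<n. cmod (Q $$ (r,x)) * cmod (P $$ (y,s))) * c"
  have "\<forall>j. real (j choose (k-1)) \<le> c' * sqrt (SS n A B C j)"
  proof
    fix j
    have "real (j choose (k-1)) = cmod ((J ^\<^sub>m j) $$ (r,s))" unfolding Jrs
      by (simp add: norm_mult norm_power lam)
    also have "(J ^\<^sub>m j) $$ (r,s) = (\<Sum>x<n. Q $$ (r,x) * (\<Sum>y<n. (Ac ^\<^sub>m j) $$ (x,y) * P $$ (y,s)))"
    proof -
      have "(J ^\<^sub>m j) $$ (r,s) = (\<Sum>y<n. (\<Sum>x<n. Q $$ (r,x) * (Ac ^\<^sub>m j) $$ (x,y)) * P $$ (y,s))"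
        unfolding Jpow using PQ Ac r s by (simp add: scalar_prod_def lessThan_atLeast0)
      also have "\<dots> = (\<Sum>y<n. \<Sum>x<n. Q $$ (r,x) * ((Ac ^\<^sub>m j) $$ (x,y) * P $$ (y,s)))"
        by (simp add: sum_distrib_right mult.assoc)
      also have "\<dots> = (\<Sum>x<n. \<Sum>y<n. Q $$ (r,x) * ((Ac ^\<^sub>m j) $$ (x,y) * P $$ (y,s)))"
        by (rule sum.swap)
      also have "\<dots> = (\<Sum>x<n. Q $$ (r,x) * (\<Sum>y<n. (Ac ^\<^sub>m j) $$ (x,y) * P $$ (y,s)))"
        by (simp add: sum_distrib_left)
      finally show ?thesis .
    qed
    also have "cmod \<dots> \<le> (\<Sum>x<n. cmod (Q $$ (r,x)) * (\<Sum>y<n. cmod ((Ac ^\<^sub>m j) $$ (x,y)) * cmod (P $$ (y,s))))"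
      by (rule order_trans[OF norm_sum], rule sum_mono, simp add: norm_mult,
          rule mult_left_mono, rule order_trans[OF norm_sum], simp add: norm_mult, simp)
    also have "\<dots> \<le> (\<Sum>x<n. cmod (Q $$ (r,x)) * (\<Sum>y<n. (c * sqrt (SS n A B C j)) * cmod (P $$ (y,s))))"
    proof (rule sum_mono, rule mult_left_mono, rule sum_mono, rule mult_right_mono)
      fix x y assume x: "x \<in> {..<n}" and y: "y \<in> {..<n}"
      have "cmod ((Ac ^\<^sub>m j) $$ (x,y)) = \<bar>(A ^\<^sub>m j) $$ (x,y)\<bar>" unfolding Acpow using x y A by simp
      also have "\<dots> \<le> c * sqrt (SS n A B C j)" using c x y by auto
      finally show "cmod ((Ac ^\<^sub>m j) $$ (x,y)) \<le> c * sqrt (SS n A B C j)" .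
    qed auto
    also have "\<dots> = c' * sqrt (SS n A B C j)" unfolding c'_def
      by (simp add: sum_distrib_left sum_distrib_right mult_ac)
    finally show "real (j choose (k-1)) \<le> c' * sqrt (SS n A B C j)" .
  qed
  moreover have "c' \<ge> 0" unfolding c'_def using c0 by (intro mult_nonneg_nonneg sum_nonneg) auto
  ultimately show ?thesis by blast
qed



lemma sum_sq_le_sq_sum_abs:
  fixes f :: "'a \<Rightarrow> real"
  shows "finite I \<Longrightarrow> (\<Sum>i\<in>I. (f i)^2) \<le> (\<Sum>i\<in>I. \<bar>f i\<bar>)^2"
proof (induct I rule: finite_induct)
  case (insert x F)
  define S where "S = (\<Sum>i\<in>F. \<bar>f i\<bar>)"
  have h: "0 \<le> 2 * \<bar>f x\<bar> * S" unfolding S_def by (intro mult_nonneg_nonneg sum_nonneg) auto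
  have "(\<Sum>i\<in>insert x F. (f i)^2) = (f x)^2 + (\<Sum>i\<in>F. (f i)^2)" using insert by simp
  also have "\<dots> \<le> (f x)^2 + S^2" using insert unfolding S_def by simp
  also have "\<dots> \<le> (\<bar>f x\<bar> + S)^2" using h by (simp add: power2_sum)
  also have "\<bar>f x\<bar> + S = (\<Sum>i\<in>insert x F. \<bar>f i\<bar>)" using insert unfolding S_def by simp
  finally show ?case .
qed simp

lemma vnorm2_le_sum: "vnorm2 x \<le> (\<Sum>i<dim_vec x. \<bar>x $ i\<bar>)"
proof -
  have "(\<Sum>i<dim_vec x. (x $ i)^2) \<le> (\<Sum>i<dim_vec x. \<bar>x $ i\<bar>)^2" by (rule sum_sq_le_sq_sum_abs, simp)
  then have "vnorm2 x \<le> sqrt ((\<Sum>i<dim_vec x. \<bar>x $ i\<bar>)^2)" unfolding vnorm2_def by (rule real_sqrt_le_mono)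
  also have "\<dots> = (\<Sum>i<dim_vec x. \<bar>x $ i\<bar>)" by (simp add: sum_nonneg)
  finally show ?thesis .
qed

lemma vnorm2_ge_comp: assumes "i < dim_vec x" shows "\<bar>x $ i\<bar> \<le> vnorm2 x"
proof -
  have "(x $ i)^2 \<le> (\<Sum>i<dim_vec x. (x $ i)^2)" by (rule member_le_sum, insert assms, auto)
  then show ?thesis unfolding vnorm2_def by (metis real_sqrt_abs real_sqrt_le_mono)
qed

lemma vnorm2_unit: "i < n \<Longrightarrow> vnorm2 (unit_vec n i :: real vec) = 1"
proof -
  assume i: "i < n"
  have "(\<Sum>j<n. ((unit_vec n i :: real vec) $ j)^2) = (\<Sum>j<n. if j = i then 1 else 0)" using i by (intro sum.cong, auto)
  also have "\<dots> = 1" using i by (subst sum.delta, auto)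
  finally show ?thesis unfolding vnorm2_def by simp
qed

lemma op_norm_bdd:
  fixes M :: "real mat"
  shows "bdd_above {vnorm2 (M *\<^sub>v x) | x. x \<in> carrier_vec (dim_col M) \<and> vnorm2 x \<le> 1}"
proof (rule bdd_aboveI, clarify)
  fix x :: "real vec" assume x: "x \<in> carrier_vec (dim_col M)" and nx: "vnorm2 x \<le> 1"
  have "vnorm2 (M *\<^sub>v x) \<le> (\<Sum>i<dim_row M. \<bar>(M *\<^sub>v x) $ i\<bar>)" using vnorm2_le_sum[of "M *\<^sub>v x"] by simp
  also have "\<dots> \<le> (\<Sum>i<dim_row M. \<Sum>j<dim_col M. \<bar>M $$ (i,j)\<bar>)"
  proof (rule sum_mono)
    fix i assume i: "i \<in> {..<dim_row M}"
    have "\<bar>(M *\<^sub>v x) $ i\<bar> = \<bar>\<Sum>j<dim_col M. M $$ (i,j) * x $ j\<bar>"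
      using i x by (simp add: scalar_prod_def lessThan_atLeast0)
    also have "\<dots> \<le> (\<Sum>j<dim_col M. \<bar>M $$ (i,j)\<bar> * \<bar>x $ j\<bar>)"
      by (rule order_trans[OF sum_abs], simp add: abs_mult)
    also have "\<dots> \<le> (\<Sum>j<dim_col M. \<bar>M $$ (i,j)\<bar>)"
    proof (rule sum_mono)
      fix j assume j: "j \<in> {..<dim_col M}"
      have "\<bar>x $ j\<bar> \<le> 1" using vnorm2_ge_comp[of j x] j x nx by auto
      then show "\<bar>M $$ (i,j)\<bar> * \<bar>x $ j\<bar> \<le> \<bar>M $$ (i,j)\<bar>" by (simp add: mult_left_le)
    qed
    finally show "\<bar>(M *\<^sub>v x) $ i\<bar> \<le> (\<Sum>j<dim_col M. \<bar>M $$ (i,j)\<bar>)" .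
  qed
  finally show "vnorm2 (M *\<^sub>v x) \<le> (\<Sum>i<dim_row M. \<Sum>j<dim_col M. \<bar>M $$ (i,j)\<bar>)" .
qed

lemma op_norm_ge_diag:
  fixes M :: "real mat"
  assumes M: "M \<in> carrier_mat p p" and i: "i < p"
  shows "M $$ (i,i) \<le> op_norm M"
proof -
  have "(M *\<^sub>v unit_vec p i) $ i = (\<Sum>j<p. M $$ (i,j) * (if j = i then 1 else 0))"
    using M i by (simp add: scalar_prod_def lessThan_atLeast0)
  also have "\<dots> = M $$ (i,i)" by (rule sum_delta_mult[OF i])
  finally have e: "(M *\<^sub>v unit_vec p i) $ i = M $$ (i,i)" .
  have "M $$ (i,i) \<le> vnorm2 (M *\<^sub>v unit_vec p i)"
    using vnorm2_ge_comp[of i "M *\<^sub>v unit_vec p i"] e M i by auto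
  also have "\<dots> \<le> op_norm M" unfolding op_norm_def
    by (rule cSup_upper[OF _ op_norm_bdd], insert M i vnorm2_unit[OF i], auto)
  finally show ?thesis .
qed

lemma sum_diag_le_op_norm:
  fixes M :: "real mat"
  assumes M: "M \<in> carrier_mat p p"
  shows "(\<Sum>i<p. M $$ (i,i)) \<le> real p * op_norm M"
proof -
  have "(\<Sum>i<p. M $$ (i,i)) \<le> (\<Sum>i<p. op_norm M)" by (rule sum_mono, rule op_norm_ge_diag[OF M], auto)
  then show ?thesis by simp
qed



lemma X_diag:
  assumes A: "A \<in> carrier_mat n n" and B: "B \<in> carrier_mat n m" and C: "C \<in> carrier_mat p n" and i: "i < p"
  shows "(C * A ^\<^sub>m j * B * transpose_mat B * transpose_mat (A ^\<^sub>m j) * transpose_mat C) $$ (i,i)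
     = (\<Sum>l<m. (Fm A B C j $$ (i,l))^2)"
proof -
  define F where "F = C * A ^\<^sub>m j * B"
  have Aj: "A ^\<^sub>m j \<in> carrier_mat n n" using A by simp
  have CA: "C * A ^\<^sub>m j \<in> carrier_mat p n" using Aj C by simp
  have Fc: "F \<in> carrier_mat p m" unfolding F_def using CA B by simp
  have Bt: "transpose_mat B \<in> carrier_mat m n" using B by simp
  have At: "transpose_mat (A ^\<^sub>m j) \<in> carrier_mat n n" using Aj by simp
  have Ct: "transpose_mat C \<in> carrier_mat n p" using C by simp
  have tF: "transpose_mat F = transpose_mat B * (transpose_mat (A ^\<^sub>m j) * transpose_mat C)"
    unfolding F_def using transpose_mult[OF CA B] transpose_mult[OF C Aj] by simp
  have "C * A ^\<^sub>m j * B * transpose_mat B * transpose_mat (A ^\<^sub>m j) * transpose_mat C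
      = F * transpose_mat F"
  proof -
    have "F * transpose_mat F = (F * transpose_mat B) * (transpose_mat (A ^\<^sub>m j) * transpose_mat C)"
      unfolding tF using Fc Bt At Ct by (simp add: assoc_mult_mat[of F p m _ n _ p])
    also have "\<dots> = F * transpose_mat B * transpose_mat (A ^\<^sub>m j) * transpose_mat C"
      by (rule sym, rule assoc_mult_mat[of _ p n _ n _ p], insert Fc Bt At Ct, auto)
    finally show ?thesis unfolding F_def by simp
  qed
  also have "(F * transpose_mat F) $$ (i,i) = (\<Sum>l<m. (F $$ (i,l))^2)"
    using Fc i by (simp add: scalar_prod_def lessThan_atLeast0 power2_eq_square)
  finally show ?thesis unfolding F_def Fm_def .
qed

lemma trace_G:
  assumes A: "A \<in> carrier_mat n n" and B: "B \<in> carrier_mat n m" and C: "C \<in> carrier_mat p n"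
  shows "(\<Sum>i<p. mat_sum p p (G_mat A B C) {0..N} $$ (i,i)) = (\<Sum>t\<in>{0..N}. \<Sum>s\<in>{0..t}. gS A B C (t-s))"
proof -
  have "(\<Sum>i<p. mat_sum p p (G_mat A B C) {0..N} $$ (i,i))
     = (\<Sum>i<p. \<Sum>t\<in>{0..N}. \<Sum>s\<in>{0..t}. \<Sum>l<m. (Fm A B C (t-s) $$ (i,l))^2)"
  proof (rule sum.cong[OF refl])
    fix i assume i: "i \<in> {..<p}"
    show "mat_sum p p (G_mat A B C) {0..N} $$ (i,i) = (\<Sum>t\<in>{0..N}. \<Sum>s\<in>{0..t}. \<Sum>l<m. (Fm A B C (t-s) $$ (i,l))^2)"
      unfolding mat_sum_def G_mat_def using i C X_diag[OF A B C] by simp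
  qed
  also have "\<dots> = (\<Sum>t\<in>{0..N}. \<Sum>i<p. \<Sum>s\<in>{0..t}. \<Sum>l<m. (Fm A B C (t-s) $$ (i,l))^2)"
    by (rule sum.swap)
  also have "\<dots> = (\<Sum>t\<in>{0..N}. \<Sum>s\<in>{0..t}. \<Sum>i<p. \<Sum>l<m. (Fm A B C (t-s) $$ (i,l))^2)"
    by (rule sum.cong[OF refl], rule sum.swap)
  also have "\<dots> = (\<Sum>t\<in>{0..N}. \<Sum>s\<in>{0..t}. gS A B C (t-s))"
    unfolding gS_def using B C by simp
  finally show ?thesis .
qed

lemma mat_sum_carrier: "mat_sum p p f I \<in> carrier_mat p p" unfolding mat_sum_def by simp



lemma shift_sum_le:
  fixes g :: "nat \<Rightarrow> real"
  assumes g0: "\<And>j. g j \<ge> 0" and aht: "a + h \<le> t"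
  shows "(\<Sum>j\<in>{a..t-h}. \<Sum>s\<le>h. g (j+s)) \<le> real (h+1) * (\<Sum>i\<in>{0..t}. g i)"
proof -
  have "(\<Sum>j\<in>{a..t-h}. \<Sum>s\<le>h. g (j+s)) = (\<Sum>s\<le>h. \<Sum>j\<in>{a..t-h}. g (j+s))" by (rule sum.swap)
  also have "\<dots> \<le> (\<Sum>s\<le>h. \<Sum>i\<in>{0..t}. g i)"
  proof (rule sum_mono)
    fix s assume s: "s \<in> {..h}"
    have "(\<Sum>j\<in>{a..t-h}. g (j+s)) = (\<Sum>i\<in>(\<lambda>j. j+s) ` {a..t-h}. g i)"
      by (subst sum.reindex, auto simp: inj_on_def)
    also have "\<dots> \<le> (\<Sum>i\<in>{0..t}. g i)"
      by (rule sum_mono2, simp, insert s aht, auto intro: g0)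
    finally show "(\<Sum>j\<in>{a..t-h}. g (j+s)) \<le> (\<Sum>i\<in>{0..t}. g i)" .
  qed
  also have "\<dots> = real (h+1) * (\<Sum>i\<in>{0..t}. g i)" by simp
  finally show ?thesis .
qed

lemma growth:
  fixes g :: "nat \<Rightarrow> real"
  assumes g0: "\<And>j. g j \<ge> 0" and c0: "c > 0" and k: "k \<ge> 1" and n: "n \<ge> 1"
    and bnd: "\<And>j. real (j choose (k-1))^2 \<le> c * (\<Sum>s\<le>2*n. g (j+s))"
    and N: "N \<ge> max (20*n^2) (2*k)"
  shows "(\<Sum>t\<in>{0..N}. \<Sum>i\<in>{0..t}. g i) \<ge> real N ^ (2*k) / ((2*real k)^(2*k-2) * 32 * c * (2*real n+1))"
proof -
  define h where "h = 2*n"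
  define a where "a = (N+1) div 2"
  define b where "b = (3*N+3) div 4"
  define L where "L = (real N / (2 * real k)) ^ (2*k-2)"
  have N1: "N \<ge> 20*n^2" "N \<ge> 2*k" using N by auto
  have "n \<le> n^2" using n by (simp add: power2_eq_square)
  hence N16: "16*n \<le> N" using N1 by linarith
  have a1: "N \<le> 2*a" "2*a \<le> N+1" unfolding a_def by auto
  have b1: "3*N \<le> 4*b" "4*b \<le> 3*N+3" unfolding b_def by auto
  have L0: "L \<ge> 0" unfolding L_def by simp
  have binL: "L \<le> real (j choose (k-1))^2" if j: "a \<le> j" for j
  proof -
    have jk: "k - 1 \<le> j" using j a1 N1 by linarith
    have "(real N / (2 * real k)) \<le> real j / real (k-1)" if k1: "k > 1"
    proof -
      have "real N / (2 * real k) \<le> real j / real k" using j a1 k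
        by (simp add: divide_simps)
      also have "\<dots> \<le> real j / real (k-1)" using k1 by (intro divide_left_mono) auto
      finally show ?thesis .
    qed
    hence "(real N / (2 * real k)) ^ (k-1) \<le> (real j / real (k-1)) ^ (k-1)"
      by (cases "k = 1", simp, intro power_mono, insert k, auto)
    also have "\<dots> \<le> real (j choose (k-1))" by (rule binomial_ge_n_over_k_pow_k[OF jk])
    finally have b1: "(real N / (2 * real k)) ^ (k-1) \<le> real (j choose (k-1))" .
    have sq: "((real N / (2 * real k)) ^ (k-1))^2 \<le> real (j choose (k-1))^2"
      by (rule power_mono[OF b1], simp)
    have eqL: "((real N / (2 * real k)) ^ (k-1))^2 = L" unfolding L_def power_mult[symmetric]
      using k by (simp add: mult.commute right_diff_distrib')
    from sq show ?thesis unfolding eqL .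
  qed
  have SL: "L / c \<le> (\<Sum>s\<le>h. g (j+s))" if j: "a \<le> j" for j
    using order_trans[OF binL[OF j] bnd[of j]] c0 unfolding h_def by (simp add: divide_simps mult.commute)
  have inner: "real N / 8 * (L / c) \<le> real (h+1) * (\<Sum>i\<in>{0..t}. g i)" if t: "t \<in> {b..N}" for t
  proof -
    have tb: "b \<le> t" using t by auto
    have aht: "a + h \<le> t" unfolding h_def using tb a1 b1 N16 by linarith
    have card: "real N / 8 \<le> real (card {a..t-h})" using aht tb a1 b1 N16 unfolding h_def by simp
    have "real N / 8 * (L / c) \<le> real (card {a..t-h}) * (L / c)"
      by (rule mult_right_mono[OF card], insert L0 c0, simp)
    also have "\<dots> = (\<Sum>j\<in>{a..t-h}. L / c)" by simp
    also have "\<dots> \<le> (\<Sum>j\<in>{a..t-h}. \<Sum>s\<le>h. g (j+s))" by (rule sum_mono, rule SL, auto)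
    also have "\<dots> \<le> real (h+1) * (\<Sum>i\<in>{0..t}. g i)" by (rule shift_sum_le[OF g0 aht])
    finally show ?thesis .
  qed
  have hpos: "real (h+1) > 0" by simp
  have inner': "real N / 8 * (L / c) / real (h+1) \<le> (\<Sum>i\<in>{0..t}. g i)" if t: "t \<in> {b..N}" for t
    using inner[OF t] by (subst pos_divide_le_eq[OF hpos]) (metis mult.commute)
  have cardb: "real N / 4 \<le> real (card {b..N})" using b1 by simp
  have "real N / 4 * (real N / 8 * (L / c) / real (h+1)) \<le> real (card {b..N}) * (real N / 8 * (L / c) / real (h+1))"
    by (rule mult_right_mono[OF cardb], insert L0 c0, simp)
  also have "\<dots> = (\<Sum>t\<in>{b..N}. real N / 8 * (L / c) / real (h+1))" by simp
  also have "\<dots> \<le> (\<Sum>t\<in>{b..N}. \<Sum>i\<in>{0..t}. g i)" by (rule sum_mono, rule inner')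
  also have "\<dots> \<le> (\<Sum>t\<in>{0..N}. \<Sum>i\<in>{0..t}. g i)"
    by (rule sum_mono2, simp, auto intro: sum_nonneg g0)
  finally have main: "real N / 4 * (real N / 8 * (L / c) / real (h+1)) \<le> (\<Sum>t\<in>{0..N}. \<Sum>i\<in>{0..t}. g i)" .
  have "real N / 4 * (real N / 8 * (L / c) / real (h+1)) = real N ^ 2 * L / (32 * c * (2 * real n + 1))"
    unfolding h_def by (simp add: field_simps power2_eq_square)
  also have "real N ^ 2 * L = real N ^ (2*k) / (2*real k)^(2*k-2)"
  proof -
    have "real N ^ 2 * L = real N ^ 2 * real N ^ (2*k-2) / (2*real k)^(2*k-2)" unfolding L_def
      by (simp add: power_divide)
    also have "real N ^ 2 * real N ^ (2*k-2) = real N ^ (2*k)"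
    proof -
      have e: "2 + (2*k-2) = 2*k" using k by simp
      have "real N ^ 2 * real N ^ (2*k-2) = real N ^ (2 + (2*k-2))" by (simp only: power_add)
      also have "\<dots> = real N ^ (2*k)" unfolding e ..
      finally show ?thesis .
    qed
    finally show ?thesis .
  qed
  finally show ?thesis using main by (simp add: field_simps)
qed



theorem lemma2:
  fixes A B C :: "real mat" and n m p k :: nat and \<mu> :: complex and n_as :: "(nat \<times> complex) list"
  assumes A: "A \<in> carrier_mat n n" and B: "B \<in> carrier_mat n m" and C: "C \<in> carrier_mat p n"
    and jnf: "jordan_nf (map_mat complex_of_real A) n_as"
    and blk: "(k, \<mu>) \<in> set n_as" and lam: "cmod \<mu> = 1"
    and ctrb: "vec_space.rank n (ctrb_mat n A B) = n"
    and obsv: "vec_space.rank n (obsv_mat n A C) = n"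
  shows "\<exists>K > 0. \<forall>N::nat. N \<ge> max (20 * n^2) (2 * k) \<longrightarrow>
           sqrt (op_norm (mat_sum p p (G_mat A B C) {0..N})) \<ge> K * real N ^ k"
proof -
  have k1: "k \<ge> 1" using jnf blk unfolding jordan_nf_def by (cases k, force, simp)
  from jnf obtain P Q where wit: "similar_mat_wit (map_mat complex_of_real A) (jordan_matrix n_as) P Q"
    unfolding jordan_nf_def similar_mat_def by blast
  have "jordan_matrix n_as \<in> carrier_mat n n" using wit A unfolding similar_mat_wit_def Let_def by auto
  hence nJ: "sum_list (map fst n_as) = n" using jordan_matrix_dim(1)[of n_as] unfolding carrier_mat_def by simp
  have "k \<le> sum_list (map fst n_as)" using blk by (intro member_le_sum_list; force)
  hence n1: "n \<ge> 1" using k1 nJ by simp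
  obtain c1 where c10: "c1 \<ge> 0" and c1: "\<And>j. real (j choose (k-1)) \<le> c1 * sqrt (SS n A B C j)"
    using binom_bound[OF A B C jnf blk lam ctrb obsv] by blast
  define c where "c = (c1 + 1)^2"
  have c0: "c > 0" unfolding c_def using c10 by simp
  have bnd: "real (j choose (k-1))^2 \<le> c * (\<Sum>s\<le>2*n. gS A B C (j+s))" for j
  proof -
    have "real (j choose (k-1)) \<le> (c1 + 1) * sqrt (SS n A B C j)"
      using c1[of j] by (smt (verit) mult_right_mono real_sqrt_ge_zero SS_nonneg)
    hence "real (j choose (k-1))^2 \<le> ((c1 + 1) * sqrt (SS n A B C j))^2"
      by (intro power_mono, auto)
    also have "\<dots> = c * SS n A B C j" unfolding c_def power_mult_distrib using SS_nonneg by simp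
    finally show ?thesis unfolding SS_def .
  qed
  define D where "D = (2*real k)^(2*k-2) * 32 * c * (2*real n+1)"
  have D0: "D > 0" unfolding D_def using c0 k1 by simp
  define M where "M = (\<lambda>N. mat_sum p p (G_mat A B C) {0..N})"
  have key: "real N ^ (2*k) / D \<le> real p * op_norm (M N)" if N: "N \<ge> max (20 * n^2) (2 * k)" for N
  proof -
    have "real N ^ (2*k) / D \<le> (\<Sum>t\<in>{0..N}. \<Sum>i\<in>{0..t}. gS A B C i)"
      unfolding D_def by (rule growth[OF gS_nonneg c0 k1 n1 bnd N])
    also have "\<dots> = (\<Sum>t\<in>{0..N}. \<Sum>s\<in>{0..t}. gS A B C (t-s))"
      by (rule sum.cong[OF refl], subst sum.atLeastAtMost_rev, simp)
    also have "\<dots> = (\<Sum>i<p. M N $$ (i,i))" unfolding M_def by (rule trace_G[OF A B C, symmetric])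
    also have "\<dots> \<le> real p * op_norm (M N)" unfolding M_def by (rule sum_diag_le_op_norm[OF mat_sum_carrier])
    finally show ?thesis .
  qed
  define N0 where "N0 = max (20 * n^2) (2 * k)"
  have "N0 \<ge> 1" unfolding N0_def using k1 by simp
  hence "real N0 ^ (2*k) / D > 0" using D0 by simp
  with key[of N0] have p0: "p > 0" unfolding N0_def by (cases p, auto)
  define K where "K = 1 / sqrt (D * real p)"
  have K0: "K > 0" unfolding K_def using D0 p0 by simp
  have "\<forall>N::nat. N \<ge> max (20 * n^2) (2 * k) \<longrightarrow> sqrt (op_norm (M N)) \<ge> K * real N ^ k"
  proof (intro allI impI)
    fix N :: nat assume N: "N \<ge> max (20 * n^2) (2 * k)"
    have "real N ^ (2*k) / (D * real p) \<le> op_norm (M N)"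
      using key[OF N] p0 D0 by (simp add: divide_simps mult.commute mult.left_commute)
    hence "sqrt (real N ^ (2*k) / (D * real p)) \<le> sqrt (op_norm (M N))" by (rule real_sqrt_le_mono)
    moreover have "sqrt (real N ^ (2*k) / (D * real p)) = K * real N ^ k"
    proof -
      have "real N ^ (2*k) = (real N ^ k)^2" by (simp add: power_mult[symmetric] mult.commute)
      hence "sqrt (real N ^ (2*k)) = real N ^ k" by simp
      thus ?thesis unfolding K_def by (simp add: real_sqrt_divide)
    qed
    ultimately show "sqrt (op_norm (M N)) \<ge> K * real N ^ k" by simp
  qed
  with K0 show ?thesis unfolding M_def by blast
qed

end
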